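(* Let $\Gamma$ be any art gallery (not necessarily normal). If a configuration consisting of one or two guards visually covers the walls of $\Gamma$, then this configuration visually covers all of $\Gamma$.
   Context: An art gallery $\Gamma$ is a simple polygon in the plane (closed region: boundary together with interior), whose boundary (the walls) consists of finitely many line segments. A guard is a point of $\Gamma$; a guard $G$ visually covers $A\in\Gamma$ if the segment $GA$ lies entirely in $\Gamma$. A configuration of guards is a finite set $F$ of points of $\Gamma$; it visually covers $X\subseteq\Gamma$ if each point of $X$ is visually covered by some guard in $F$. *)

theory Defs
  imports "HOL-Analysis.Analysis"
begin

fun polygonal_path :: "complex list \<Rightarrow> real \<Rightarrow> complex" where
  "polygonal_path [] = linepath 0 0"
| "polygonal_path [a] = linepath a a"
| "polygonal_path [a, b] = linepath a b"
| "polygonal_path (a # b # c # xs) = linepath a b +++ polygonal_path (b # c # xs)"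

definition simple_polygon_vertices :: "complex list \<Rightarrow> bool" where
  "simple_polygon_vertices vs \<longleftrightarrow>
     vs \<noteq> [] \<and> hd vs = last vs \<and> simple_path (polygonal_path vs)"

definition walls :: "complex list \<Rightarrow> complex set" where
  "walls vs = path_image (polygonal_path vs)"

definition gallery :: "complex list \<Rightarrow> complex set" where
  "gallery vs = walls vs \<union> inside (walls vs)"

definition visually_covers :: "complex set \<Rightarrow> complex \<Rightarrow> complex \<Rightarrow> bool" where
  "visually_covers \<Gamma> G A \<longleftrightarrow> G \<in> \<Gamma> \<and> A \<in> \<Gamma> \<and> closed_segment G A \<subseteq> \<Gamma>"

definition config_covers :: "complex set \<Rightarrow> complex set \<Rightarrow> complex set \<Rightarrow> bool" where
  "config_covers \<Gamma> F X \<longleftrightarrow> (\<forall>A\<in>X. \<exists>G\<in>F. visually_covers \<Gamma> G A)"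

end

theory Submission
  imports Defs
begin

lemma conn_in_inside:
  fixes S :: "complex set"
  assumes "closed S" "connected T" "T \<inter> S = {}" "P \<in> T" "P \<in> inside S"
  shows "T \<subseteq> inside S"
proof (rule ccontr)
  assume "\<not> T \<subseteq> inside S"
  then have "T - inside S \<noteq> {}" by blast
  moreover have "T \<inter> inside S \<noteq> {}" using assms by blast
  ultimately have "T \<inter> frontier (inside S) \<noteq> {}"
    using connected_Int_frontier assms(2) by blast
  then show False using frontier_inside_subset[OF assms(1)] assms(3) by blast
qed

lemma exit_point:
  fixes S :: "complex set"
  assumes "closed S" "P \<in> inside S" "Y \<notin> inside S"
  shows "\<exists>X \<in> closed_segment P Y. X \<in> S \<and> closed_segment P X \<subseteq> S \<union> inside S"
proof -
  let ?T = "closed_segment P Y"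
  have ne: "?T \<inter> S \<noteq> {}"
  proof
    assume "?T \<inter> S = {}"
    then have "?T \<subseteq> inside S"
      using conn_in_inside[OF assms(1) connected_segment _ _ assms(2)] by auto
    then show False using assms(3) by auto
  qed
  have cl: "closed (?T \<inter> S)" using assms(1) by (simp add: closed_Int closed_segment)
  obtain X where X: "X \<in> ?T \<inter> S" "\<And>y. y \<in> ?T \<inter> S \<Longrightarrow> dist P X \<le> dist P y"
    using distance_attains_inf[OF cl ne] by blast
  have sub: "closed_segment P X \<subseteq> ?T"
    using X(1) by (intro closed_segment_subset) auto
  have PX: "P \<notin> S" using assms(2) inside_no_overlap by blast
  have "closed_segment P X \<subseteq> S \<union> inside S"
  proof
    fix z assume z: "z \<in> closed_segment P X"
    show "z \<in> S \<union> inside S"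
    proof (cases "z = X")
      case True then show ?thesis using X by auto
    next
      case False
      have dz: "dist z P < dist P X"
      proof (cases "z = P")
        case True
        then show ?thesis using PX X(1) by auto
      next
        case False
        then have "z \<in> open_segment P X" using z \<open>z \<noteq> X\<close> by (auto simp: open_segment_def)
        then show ?thesis using dist_in_open_segment by blast
      qed
      have sz: "closed_segment P z \<subseteq> closed_segment P X"
        using z by (intro closed_segment_subset) auto
      have "closed_segment P z \<inter> S = {}"
      proof (rule ccontr)
        assume "closed_segment P z \<inter> S \<noteq> {}"
        then obtain w where w: "w \<in> closed_segment P z" "w \<in> S" by blast
        have "dist w P \<le> dist P z" using dist_in_closed_segment[OF w(1)] by blast
        moreover have "dist P X \<le> dist P w" using X(2)[of w] w sz sub by auto
        ultimately show False using dz by (simp add: dist_commute)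
      qed
      then have "closed_segment P z \<subseteq> inside S"
        using conn_in_inside[OF assms(1) connected_segment _ _ assms(2)] by auto
      then show ?thesis by auto
    qed
  qed
  then show ?thesis using X by blast
qed

lemma triangle_in:
  fixes S :: "complex set"
  assumes "bounded S"
    and "closed_segment a b \<union> closed_segment b c \<union> closed_segment c a \<subseteq> S \<union> inside S"
  shows "convex hull {a,b,c} \<subseteq> S \<union> inside S"
proof
  fix x assume x: "x \<in> convex hull {a,b,c}"
  show "x \<in> S \<union> inside S"
  proof (rule ccontr)
    assume "x \<notin> S \<union> inside S"
    then have xo: "x \<in> outside S" using inside_Un_outside by blast
    have c: "connected (outside S)" using connected_outside[OF assms(1)] by simp
    have "\<not> bounded (outside S)" using unbounded_outside[OF assms(1)] .
    moreover have "bounded (convex hull {a,b,c})" by (simp add: bounded_convex_hull)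
    ultimately have "outside S - convex hull {a,b,c} \<noteq> {}"
      using bounded_subset by blast
    moreover have "outside S \<inter> convex hull {a,b,c} \<noteq> {}" using x xo by blast
    ultimately have "outside S \<inter> frontier (convex hull {a,b,c}) \<noteq> {}"
      using connected_Int_frontier c by blast
    then have "outside S \<inter> (S \<union> inside S) \<noteq> {}"
      using frontier_of_triangle[of a b c] assms(2) by auto
    then show False
      using outside_no_overlap inside_Int_outside by blast
  qed
qed

lemma between_pt:
  fixes A d :: complex
  assumes "\<alpha> \<ge> 0" "\<beta> \<ge> 0" "\<alpha> + \<beta> > 0"
  shows "A \<in> closed_segment (A + \<alpha> *\<^sub>R d) (A - \<beta> *\<^sub>R d)"
proof -
  let ?u = "\<alpha> / (\<alpha> + \<beta>)"
  have u: "0 \<le> ?u" "?u \<le> 1" using assms by auto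
  have "(1 - ?u) * \<alpha> - ?u * \<beta> = 0" using assms by (simp add: field_simps)
  then have "A = (1 - ?u) *\<^sub>R (A + \<alpha> *\<^sub>R d) + ?u *\<^sub>R (A - \<beta> *\<^sub>R d)"
    by (simp add: algebra_simps) (metis (no_types, lifting) add_diff_cancel_left' diff_add_cancel scaleR_left_diff_distrib scaleR_zero_left mult.commute)
  then show ?thesis using u unfolding closed_segment_def by blast
qed

theorem proposition3:
  fixes vs :: "complex list" and F :: "complex set"
  assumes "simple_polygon_vertices vs"
    and "finite F" and "F \<subseteq> gallery vs"
    and "card F = 1 \<or> card F = 2"
    and "config_covers (gallery vs) F (walls vs)"
  shows "config_covers (gallery vs) F (gallery vs)"
proof -
  define S where "S = walls vs"
  have GS: "gallery vs = S \<union> inside S" by (simp add: S_def gallery_def)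
  have "path (polygonal_path vs)" using assms(1)
    by (simp add: simple_polygon_vertices_def simple_path_imp_path)
  then have cS: "compact S" by (simp add: S_def walls_def compact_path_image)
  then have clS: "closed S" and bS: "bounded S" by (auto intro: compact_imp_closed compact_imp_bounded)
  have cov: "\<And>X. X \<in> S \<Longrightarrow> \<exists>G\<in>F. visually_covers (S \<union> inside S) G X"
    using assms(5) by (simp add: config_covers_def GS S_def)
  have FG: "F \<subseteq> S \<union> inside S" using assms(3) GS by simp
  obtain G1 where G1: "G1 \<in> F" using assms(4) by (metis card.empty empty_iff ex_in_conv zero_neq_one zero_neq_numeral)
  have two: "\<And>x y. x \<in> F \<Longrightarrow> y \<in> F \<Longrightarrow> x \<noteq> G1 \<Longrightarrow> y \<noteq> G1 \<Longrightarrow> x = y"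
  proof (rule ccontr)
    fix x y assume "x \<in> F" "y \<in> F" "x \<noteq> G1" "y \<noteq> G1" "x \<noteq> y"
    then have "card {G1, x, y} = 3" by auto
    moreover have "card {G1, x, y} \<le> card F"
      using \<open>x \<in> F\<close> \<open>y \<in> F\<close> G1 assms(2) by (intro card_mono) auto
    ultimately show False using assms(4) by auto
  qed
  show ?thesis
    unfolding config_covers_def GS
  proof
    fix A assume A: "A \<in> S \<union> inside S"
    show "\<exists>G\<in>F. visually_covers (S \<union> inside S) G A"
    proof (cases "A \<in> S")
      case True then show ?thesis using cov by blast
    next
      case False
      then have Ai: "A \<in> inside S" using A by auto
      show ?thesis
      proof (cases "closed_segment A G1 \<subseteq> S \<union> inside S")
        case True
        then show ?thesis using G1 FG A
          unfolding visually_covers_def using closed_segment_commute[of G1 A] by blast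
      next
        case False
        then obtain Y where Y: "Y \<in> closed_segment A G1" "Y \<notin> S \<union> inside S" by blast
        obtain A1 where A1: "A1 \<in> closed_segment A Y" "A1 \<in> S" "closed_segment A A1 \<subseteq> S \<union> inside S"
          using exit_point[OF clS Ai, of Y] Y by blast
        have "A1 \<in> closed_segment A G1"
          using A1(1) Y(1) by (meson closed_segment_subset convex_closed_segment ends_in_segment(1) subsetD)
        then obtain \<alpha> where al: "0 \<le> \<alpha>" "\<alpha> \<le> 1" "A1 = A + \<alpha> *\<^sub>R (G1 - A)"
          by (auto simp: in_segment algebra_simps)
        have "A1 \<noteq> A" using A1(2) \<open>A \<notin> S\<close> by auto
        then have al0: "\<alpha> > 0" using al by auto
        define d where "d = G1 - A"
        have d0: "d \<noteq> 0"
        proof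
          assume "d = 0" then have "G1 = A" by (simp add: d_def)
          then show False using False Ai by auto
        qed
        obtain B where B: "\<And>x. x \<in> inside S \<Longrightarrow> norm x \<le> B"
          using bounded_inside[OF bS] unfolding bounded_iff by blast
        define t where "t = (\<bar>B\<bar> + norm A + 1) / norm d"
        have t0: "t > 0" unfolding t_def using d0
          by (intro divide_pos_pos) (smt (verit) abs_ge_zero norm_ge_zero, simp)
        define Y' where "Y' = A - t *\<^sub>R d"
        have "norm (t *\<^sub>R d) = \<bar>B\<bar> + norm A + 1" using d0 t0 by (simp add: t_def)
        moreover have "norm (t *\<^sub>R d) \<le> norm Y' + norm A"
          unfolding Y'_def by (metis add.commute norm_minus_commute norm_triangle_sub diff_diff_eq2 diff_add_cancel norm_minus_cancel)
        ultimately have "norm Y' > B" by linarith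
        then have Y'o: "Y' \<notin> inside S" using B by force
        obtain Q1 where Q1: "Q1 \<in> closed_segment A Y'" "Q1 \<in> S" "closed_segment A Q1 \<subseteq> S \<union> inside S"
          using exit_point[OF clS Ai Y'o] by blast
        then obtain s where s: "0 \<le> s" "s \<le> 1" "Q1 = A - (s * t) *\<^sub>R d"
          by (auto simp: in_segment Y'_def algebra_simps)
        have "Q1 \<noteq> A" using Q1(2) \<open>A \<notin> S\<close> by auto
        then have st: "s * t > 0" using s t0 by (cases "s = 0") auto
        have G1d: "G1 = A + 1 *\<^sub>R d" by (simp add: d_def)
        have AG1Q1: "A \<in> closed_segment G1 Q1"
          using between_pt[of 1 "s*t" A d] st s(3) G1d by simp
        have AA1Q1: "A \<in> closed_segment A1 Q1"
          using between_pt[of \<alpha> "s*t" A d] st s(3) al al0 d_def by simp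
        obtain G where G: "G \<in> F" "visually_covers (S \<union> inside S) G Q1" using cov Q1(2) by blast
        obtain G' where G': "G' \<in> F" "visually_covers (S \<union> inside S) G' A1" using cov A1(2) by blast
        show ?thesis
        proof (cases "G = G1")
          case True
          have "closed_segment G1 A \<subseteq> closed_segment G1 Q1"
            using AG1Q1 by (intro closed_segment_subset) auto
          then show ?thesis using G True A by (auto simp: visually_covers_def)
        next
          case GG1: False
          show ?thesis
          proof (cases "G' = G1")
            case True
            have "closed_segment A A1 \<union> closed_segment A1 G1 = closed_segment A G1"
              using \<open>A1 \<in> closed_segment A G1\<close> by (rule Un_closed_segment)
            moreover have "closed_segment A1 G1 \<subseteq> S \<union> inside S"
              using G' True by (auto simp: visually_covers_def closed_segment_commute)
            ultimately have "closed_segment A G1 \<subseteq> S \<union> inside S" using A1(3) by blast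
            then show ?thesis using G1 FG A
              unfolding visually_covers_def using closed_segment_commute[of G1 A] by blast
          next
            case False
            then have GG': "G' = G" using two G(1) G'(1) GG1 by blast
            have e1: "closed_segment A1 Q1 \<subseteq> S \<union> inside S"
              using Un_closed_segment[OF AA1Q1] A1(3) Q1(3) by (auto simp: closed_segment_commute)
            have e2: "closed_segment Q1 G \<subseteq> S \<union> inside S"
              using G by (auto simp: visually_covers_def closed_segment_commute)
            have e3: "closed_segment G A1 \<subseteq> S \<union> inside S"
              using G' GG' by (auto simp: visually_covers_def)
            have hull: "convex hull {A1, Q1, G} \<subseteq> S \<union> inside S"
              using triangle_in[OF bS] e1 e2 e3 by blast
            have "A \<in> convex hull {A1, Q1, G}"
              using AA1Q1 segment_convex_hull[of A1 Q1] hull_mono[of "{A1,Q1}" "{A1,Q1,G}"] by auto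
            moreover have "G \<in> convex hull {A1, Q1, G}" by (simp add: hull_inc)
            ultimately have "closed_segment G A \<subseteq> convex hull {A1, Q1, G}"
              by (intro closed_segment_subset) auto
            then show ?thesis using G hull A by (auto simp: visually_covers_def)
          qed
        qed
      qed
    qed
  qed
qed

end
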